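(* Let $p$ be an odd prime, $r,m$ positive integers and $s\in\{0,1,\dots,mp^{r-1}-1\}$. Then $$\binom{2sp+p-1}{sp+\frac{p-1}{2}}\binom{2(mp^{r-1}-s-1)p+p-1}{(mp^{r-1}-s-1)p+\frac{p-1}{2}}\equiv\binom{2s}{s}\binom{2(mp^{r-1}-s-1)}{mp^{r-1}-s-1}\pmod{p^r}.$$ *)

theory Defs
  imports "HOL-Number_Theory.Number_Theory"
begin

end

theory Submission
  imports Defs
begin

definition gp :: "int \<Rightarrow> int \<Rightarrow> int" where "gp p k = (if p dvd k then 1 else k)"
definition Q :: "int \<Rightarrow> int \<Rightarrow> int \<Rightarrow> int" where "Q p l u = (\<Prod>k\<in>{l..u}. gp p k)"

lemma Q_split: assumes "l \<le> m+1" "m \<le> u" shows "Q p l u = Q p l m * Q p (m+1) u"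
proof -
  have "{l..u} = {l..m} \<union> {m+1..u}" using assms by auto
  moreover have "{l..m} \<inter> {m+1..u} = {}" by auto
  ultimately show ?thesis unfolding Q_def by (simp add: prod.union_disjoint)
qed

lemma Q_single: "Q p l l = gp p l" by (simp add: Q_def)

lemma Q_shift: assumes "M dvd N" "p dvd M" shows "[Q p l u = Q p (l-N) (u-N)] (mod M)"
proof -
  have "Q p (l-N) (u-N) = (\<Prod>k\<in>{l..u}. gp p (k-N))"
    unfolding Q_def
    by (rule prod.reindex_bij_witness[where i="\<lambda>k. k-N" and j="\<lambda>k. k+N"]) auto
  moreover have "[Q p l u = (\<Prod>k\<in>{l..u}. gp p (k-N))] (mod M)"
    unfolding Q_def
  proof (rule cong_prod)
    fix k
    have pN: "p dvd N" using assms by (rule dvd_trans[rotated])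
    have "p dvd k \<longleftrightarrow> p dvd (k - N)" using pN dvd_diff[of p k N] dvd_add[of p "k-N" N] by auto
    moreover have "[k = k - N] (mod M)" using assms(1)
      by (simp add: cong_iff_dvd_diff)
    ultimately show "[gp p k = gp p (k - N)] (mod M)" unfolding gp_def by auto
  qed
  ultimately show ?thesis by simp
qed

lemma Q_neg: assumes "p > 0" shows "Q (int p) (- int u) (-1) = (-1)^(u - u div p) * Q (int p) 1 (int u)"
proof (induction u)
  case 0
  then show ?case by (simp add: Q_def)
next
  case (Suc u)
  have s1: "Q (int p) (- int (Suc u)) (-1) = gp (int p) (- int (Suc u)) * Q (int p) (- int u) (-1)"
    using Q_split[of "- int (Suc u)" "- int (Suc u)" "-1" "int p"] by (simp add: Q_single)
  have e: "int (Suc u) = int u + 1" by simp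
  have s2: "Q (int p) 1 (int (Suc u)) = Q (int p) 1 (int u) * gp (int p) (int (Suc u))"
    unfolding e using Q_split[of 1 "int u" "int u + 1" "int p"] by (simp only: Q_single)
  have le: "u div p \<le> u" by simp
  show ?case
  proof (cases "p dvd Suc u")
    case True
    then have "Suc u div p = Suc (u div p)"
      using assms by (simp add: div_Suc dvd_eq_mod_eq_0)
    then have ex: "Suc u - Suc u div p = u - u div p" by simp
    have d: "int p dvd int (Suc u)" using True by (simp only: int_dvd_int_iff)
    have "int p dvd - int (Suc u)" "int p dvd int (Suc u)" using d by (simp only: dvd_minus_iff)+
    then have g: "gp (int p) (- int (Suc u)) = 1" "gp (int p) (int (Suc u)) = 1" by (simp_all add: gp_def)
    show ?thesis unfolding s1 s2 g ex Suc.IH by simp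
  next
    case False
    then have "Suc u div p = u div p"
      using assms by (simp add: div_Suc dvd_eq_mod_eq_0)
    then have ex: "Suc u - Suc u div p = Suc (u - u div p)" using le by (simp add: Suc_diff_le)
    have d: "\<not> int p dvd int (Suc u)" using False by (simp only: int_dvd_int_iff not_False_eq_True)
    have "\<not> int p dvd - int (Suc u)" "\<not> int p dvd int (Suc u)" using d by (simp only: dvd_minus_iff)+
    then have g: "gp (int p) (- int (Suc u)) = - int (Suc u)" "gp (int p) (int (Suc u)) = int (Suc u)"
      by (simp_all add: gp_def)
    show ?thesis unfolding s1 s2 g ex Suc.IH power_Suc by (simp only: mult_ac mult_minus_left mult_minus_right)
  qed
qed

lemma Q_coprime: assumes "prime (p::int)" shows "coprime (Q p l u) p"
  unfolding Q_def gp_def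
  proof (rule prod_coprime_left)
  fix k assume "k \<in> {l..u}"
  show "coprime (if p dvd k then 1 else k) p"
  proof (cases "p dvd k")
    case False
    then have "coprime p k" using assms by (simp add: prime_imp_coprime)
    then show ?thesis using False by (simp add: coprime_commute)
  qed simp
qed

lemma Q_Suc: "Q p 1 (int (Suc n)) = Q p 1 (int n) * gp p (int (Suc n))"
proof -
  have e: "int (Suc n) = int n + 1" by simp
  show ?thesis unfolding e using Q_split[of 1 "int n" "int n + 1" p] by (simp only: Q_single)
qed

lemma fact_split: assumes "p > 0"
  shows "(fact n :: int) = int p ^ (n div p) * fact (n div p) * Q (int p) 1 (int n)"
proof (induction n)
  case 0
  then show ?case by (simp add: Q_def)
next
  case (Suc n)
  show ?case
  proof (cases "p dvd Suc n")
    case True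
    then have q: "Suc n div p = Suc (n div p)"
      using assms by (simp add: div_Suc dvd_eq_mod_eq_0)
    have sn: "Suc n = p * Suc (n div p)" using True q by (metis dvd_mult_div_cancel)
    have d: "int p dvd int (Suc n)" using True by (simp only: int_dvd_int_iff)
    then have g: "gp (int p) (int (Suc n)) = 1" by (simp only: gp_def if_True)
    have "(fact (Suc n) :: int) = int (Suc n) * fact n" by (simp only: fact_Suc of_nat_id)
    also have "\<dots> = int p * int (Suc (n div p)) * (int p ^ (n div p) * fact (n div p) * Q (int p) 1 (int n))"
      using Suc.IH sn by (metis of_nat_mult)
    also have "\<dots> = int p ^ (Suc n div p) * fact (Suc n div p) * Q (int p) 1 (int (Suc n))"
      unfolding q Q_Suc g by (simp add: algebra_simps)
    finally show ?thesis .
  next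
    case False
    then have q: "Suc n div p = n div p"
      using assms by (simp add: div_Suc dvd_eq_mod_eq_0)
    have d: "\<not> int p dvd int (Suc n)" using False by (simp only: int_dvd_int_iff not_False_eq_True)
    then have g: "gp (int p) (int (Suc n)) = int (Suc n)" by (simp only: gp_def if_False)
    have "(fact (Suc n) :: int) = int (Suc n) * fact n" by (simp only: fact_Suc)
    also have "\<dots> = int p ^ (Suc n div p) * fact (Suc n div p) * Q (int p) 1 (int (Suc n))"
      unfolding q Q_Suc g Suc.IH by (simp only: mult_ac)
    finally show ?thesis .
  qed
qed

lemma binom_rel: assumes "p > 0" "a = s*p + h" "2*h < p"
  shows "int ((2*a) choose a) * Q (int p) 1 (int a) ^ 2 = int ((2*s) choose s) * Q (int p) 1 (int (2*a))"
proof -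
  have da: "a div p = s" using assms by simp
  have d2a: "(2*a) div p = 2*s" using assms by (simp add: algebra_simps)
  have f1: "(fact (2*a) :: int) = fact a * fact a * int ((2*a) choose a)"
    using binomial_fact_lemma[of a "2*a"] by (metis mult_2 add_diff_cancel_left' le_add1 of_nat_fact of_nat_mult)
  have f2: "(fact (2*s) :: int) = fact s * fact s * int ((2*s) choose s)"
    using binomial_fact_lemma[of s "2*s"] by (metis mult_2 add_diff_cancel_left' le_add1 of_nat_fact of_nat_mult)
  let ?K = "(int p ^ s * fact s) ^ 2 :: int"
  have pw: "int p^(2*s) = int p^s * int p^s" by (simp add: mult_2 power_add)
  have K: "?K \<noteq> 0" using assms(1) by simp
  have "int ((2*a) choose a) * Q (int p) 1 (int a) ^ 2 * ?K = fact (2*a)"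
    unfolding f1 fact_split[OF assms(1), of a] da by (simp add: power2_eq_square algebra_simps)
  also have "\<dots> = int ((2*s) choose s) * Q (int p) 1 (int (2*a)) * ?K"
    unfolding fact_split[OF assms(1), of "2*a"] d2a f2 pw by (simp add: power2_eq_square algebra_simps)
  finally show ?thesis using K by (metis mult_right_cancel)
qed

lemma core:
  fixes p s t h a b M :: nat
  assumes p: "prime p" and hp: "p = 2*h+1" and a: "a = s*p + h" and b: "b = t*p + h"
    and st: "s \<le> t" and M: "M dvd a + b + 1" and Mr: "M = p^r" and r: "r \<ge> 1"
  shows "[Q (int p) 1 (int (2*a)) * Q (int p) 1 (int (2*b))
        = Q (int p) 1 (int a) ^ 2 * Q (int p) 1 (int b) ^ 2] (mod int M)"
proof -
  obtain k where k: "t = s + k" using st le_Suc_ex by blast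
  define d where "d = k*p"
  have bad: "b = a + d" unfolding a b d_def k by (simp add: algebra_simps)
  have p0: "p > 0" using p prime_gt_0_nat by blast
  have pM: "p dvd M" unfolding Mr using r by (simp add: dvd_power)
  define P where "P = int p"
  define A where "A = int a"
  define B where "B = int b"
  define D where "D = int d"
  define N where "N = int (a + b + 1)"
  have BAD: "B = A + D" unfolding A_def B_def D_def bad by simp
  have NAB: "N = A + B + 1" unfolding N_def A_def B_def by simp
  have MN: "int M dvd N" unfolding N_def using M by (simp only: int_dvd_int_iff)
  have PM: "P dvd int M" unfolding P_def using pM by (simp only: int_dvd_int_iff)
  have PD: "P dvd D" unfolding P_def D_def d_def by simp
  have A0: "A \<ge> 0" "D \<ge> 0" unfolding A_def D_def by simp_all
  let ?Q = "Q P"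
  have e2a: "int (2*a) = 2*A" and e2b: "int (2*b) = 2*B" unfolding A_def B_def by simp_all
  have s1: "?Q 1 (2*A) = ?Q 1 A * ?Q (A+1) (2*A)" using Q_split[of 1 A "2*A" P] A0 by simp
  have s2: "[?Q (A+1) (2*A) = ?Q (-B) (-(D+1))] (mod int M)"
    using Q_shift[OF MN PM, of "A+1" "2*A"] unfolding NAB BAD by (simp add: algebra_simps)
  have s3: "?Q 1 (2*B) = ?Q 1 B * ?Q (B+1) (2*B)" using Q_split[of 1 B "2*B" P] A0 BAD by simp
  have s4: "[?Q (B+1) (2*B) = ?Q (-A) (D-1)] (mod int M)"
    using Q_shift[OF MN PM, of "B+1" "2*B"] unfolding NAB BAD by (simp add: algebra_simps)
  have s5: "?Q (-A) D = ?Q (-A) (D-1)"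
    using Q_split[of "-A" "D-1" D P] A0 PD by (simp add: Q_single gp_def)
  have s6: "?Q (-A) D = ?Q (-A) (-1) * ?Q 1 D"
  proof -
    have "?Q (-A) D = ?Q (-A) (-1) * ?Q 0 D" using Q_split[of "-A" "-1" D P] A0 by simp
    moreover have "?Q 0 D = ?Q 1 D" using Q_split[of 0 0 D P] A0 by (simp add: Q_single gp_def)
    ultimately show ?thesis by simp
  qed
  have s7: "?Q (-B) (-1) = ?Q (-B) (-(D+1)) * ?Q (-D) (-1)"
    using Q_split[of "-B" "-(D+1)" "-1" P] A0 BAD by simp
  define sa where "sa = ((-1::int)^(a - a div p))"
  define sb where "sb = ((-1::int)^(b - b div p))"
  define sd where "sd = ((-1::int)^(d - d div p))"
  have na: "?Q (-A) (-1) = sa * ?Q 1 A" unfolding sa_def A_def P_def using Q_neg[OF p0, of a] by simp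
  have nb: "?Q (-B) (-1) = sb * ?Q 1 B" unfolding sb_def B_def P_def using Q_neg[OF p0, of b] by simp
  have nd: "?Q (-D) (-1) = sd * ?Q 1 D" unfolding sd_def D_def P_def using Q_neg[OF p0, of d] by simp
  have sdd: "sd * sd = 1" unfolding sd_def by (simp flip: power_add)
  have par: "(a - a div p) + (b - b div p) + (d - d div p) = 2 * (2*t*h + h)"
  proof -
    have hlt: "h < p" using hp by simp
    have "a div p = s" unfolding a using hlt p0 by (simp add: add.commute[of "s*p"])
    moreover have "b div p = t" unfolding b using hlt p0 by (simp add: add.commute[of "t*p"])
    moreover have "d div p = k" using d_def p0 by simp
    ultimately show ?thesis unfolding a b d_def k hp by (simp add: algebra_simps)
  qed
  have sabd: "sa * sb * sd = 1" unfolding sa_def sb_def sd_def power_add[symmetric] par by simp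
  have sab: "sa * sb = sd" using sabd sdd by (metis mult.assoc mult.right_neutral)
  let ?L = "?Q 1 (2*A) * ?Q 1 (2*B)"
  let ?R = "?Q 1 A ^ 2 * ?Q 1 B ^ 2"
  have c1: "[?L * ?Q (-D) (-1) = ?Q 1 A * ?Q (-B) (-(D+1)) * (?Q 1 B * ?Q (-A) (D-1)) * ?Q (-D) (-1)] (mod int M)"
    unfolding s1 s3 by (intro cong_mult cong_refl s2 s4)
  have c2: "?Q 1 A * ?Q (-B) (-(D+1)) * (?Q 1 B * ?Q (-A) (D-1)) * ?Q (-D) (-1) = ?R * ?Q (-D) (-1)"
  proof -
    have "?Q 1 A * ?Q (-B) (-(D+1)) * (?Q 1 B * ?Q (-A) (D-1)) * ?Q (-D) (-1)
        = ?Q 1 A * ?Q 1 B * (?Q (-B) (-(D+1)) * ?Q (-D) (-1)) * ?Q (-A) (D-1)" by (simp only: mult_ac)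
    also have "\<dots> = ?Q 1 A * ?Q 1 B * (sb * ?Q 1 B) * (sa * ?Q 1 A * ?Q 1 D)"
      unfolding s7[symmetric] nb s5[symmetric] s6 na by simp
    also have "\<dots> = (sa * sb) * ?R * ?Q 1 D" by (simp add: power2_eq_square mult_ac)
    also have "\<dots> = ?R * (sd * ?Q 1 D)" unfolding sab by (simp only: mult_ac)
    also have "\<dots> = ?R * ?Q (-D) (-1)" unfolding nd ..
    finally show ?thesis .
  qed
  have cop: "coprime (?Q (-D) (-1)) (int M)"
  proof -
    have "prime P" unfolding P_def using p by simp
    then have c: "coprime (?Q (-D) (-1)) P" by (rule Q_coprime)
    show ?thesis unfolding Mr P_def using c P_def by simp
  qed
  have "[?L * ?Q (-D) (-1) = ?R * ?Q (-D) (-1)] (mod int M)" using c1 unfolding c2 .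
  then have "[?L = ?R] (mod int M)" using cop by (simp add: cong_mult_rcancel)
  then show ?thesis unfolding e2a e2b A_def[symmetric] B_def[symmetric] P_def[symmetric] .
qed

lemma core2:
  fixes p s t h a b M :: nat
  assumes p: "prime p" and hp: "p = 2*h+1" and a: "a = s*p + h" and b: "b = t*p + h"
    and M: "M dvd a + b + 1" and Mr: "M = p^r" and r: "r \<ge> 1"
  shows "[Q (int p) 1 (int (2*a)) * Q (int p) 1 (int (2*b))
        = Q (int p) 1 (int a) ^ 2 * Q (int p) 1 (int b) ^ 2] (mod int M)"
proof (cases "s \<le> t")
  case True
  then show ?thesis using core[OF p hp a b True M Mr r] by simp
next
  case False
  have "M dvd b + a + 1" using M by (simp add: add.commute)
  from core[OF p hp b a _ this Mr r] False show ?thesis by (simp add: mult.commute)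
qed

theorem lemma2p13:
  fixes p r m s :: nat
  assumes "prime p" and "odd p" and "r \<ge> 1" and "m \<ge> 1"
    and "s < m * p ^ (r - 1)"
  shows "[((2*s*p + p - 1) choose (s*p + (p - 1) div 2)) *
          ((2*(m * p ^ (r - 1) - s - 1)*p + p - 1) choose ((m * p ^ (r - 1) - s - 1)*p + (p - 1) div 2))
        = ((2*s) choose s) * ((2*(m * p ^ (r - 1) - s - 1)) choose (m * p ^ (r - 1) - s - 1))] (mod p ^ r)"
proof -
  define n where "n = m * p ^ (r - 1)"
  define t where "t = n - s - 1"
  define h where "h = (p - 1) div 2"
  define a where "a = s*p + h"
  define b where "b = t*p + h"
  have p0: "p > 0" using assms(1) prime_gt_0_nat by blast
  have hp: "p = 2*h+1" unfolding h_def using assms(2) by simp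
  have st: "s + t + 1 = n" unfolding t_def using assms(5) n_def by simp
  have ea: "2*s*p + p - 1 = 2*a" "s*p + (p - 1) div 2 = a" unfolding a_def h_def[symmetric] using hp
    by (simp_all add: algebra_simps)
  have eb: "2*t*p + p - 1 = 2*b" "t*p + (p - 1) div 2 = b" unfolding b_def h_def[symmetric] using hp
    by (simp_all add: algebra_simps)
  have prr: "p * p^(r-1) = p^r" using assms(3) by (metis power_Suc Suc_diff_le diff_Suc_1 )
  have abN: "a + b + 1 = m * p^r"
  proof -
    have "a + b + 1 = (s + t + 1) * p" unfolding a_def b_def using hp by (simp add: algebra_simps)
    also have "\<dots> = m * (p * p^(r-1))" unfolding st n_def by (simp add: mult_ac)
    finally show ?thesis unfolding prr .
  qed
  have Mdvd: "p^r dvd a + b + 1" unfolding abN by simp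
  have hlt: "2*h < p" using hp by simp
  let ?q = "\<lambda>x. Q (int p) 1 (int x)"
  have key: "[?q (2*a) * ?q (2*b) = ?q a ^ 2 * ?q b ^ 2] (mod int (p^r))"
    using core2[OF assms(1) hp a_def b_def Mdvd refl assms(3)] .
  have ra: "int ((2*a) choose a) * ?q a ^ 2 = int ((2*s) choose s) * ?q (2*a)"
    using binom_rel[OF p0 a_def hlt] .
  have rb: "int ((2*b) choose b) * ?q b ^ 2 = int ((2*t) choose t) * ?q (2*b)"
    using binom_rel[OF p0 b_def hlt] .
  define X where "X = int (((2*a) choose a) * ((2*b) choose b))"
  define Y where "Y = int (((2*s) choose s) * ((2*t) choose t))"
  define U where "U = ?q a ^ 2 * ?q b ^ 2"
  have XU: "X * U = Y * (?q (2*a) * ?q (2*b))"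
  proof -
    have "X * U = (int ((2*a) choose a) * ?q a ^ 2) * (int ((2*b) choose b) * ?q b ^ 2)"
      unfolding X_def U_def by (simp add: mult_ac)
    also have "\<dots> = Y * (?q (2*a) * ?q (2*b))" unfolding ra rb Y_def by (simp add: mult_ac)
    finally show ?thesis .
  qed
  have "[Y * (?q (2*a) * ?q (2*b)) = Y * U] (mod int (p^r))"
    unfolding U_def by (rule cong_mult[OF cong_refl key])
  then have c: "[X * U = Y * U] (mod int (p^r))" unfolding XU .
  have cop: "coprime U (int (p^r))"
  proof -
    have pp: "prime (int p)" using assms(1) by simp
    have "coprime (?q a) (int p)" "coprime (?q b) (int p)" using Q_coprime[OF pp] by auto
    then show ?thesis unfolding U_def by simp
  qed
  have "[X = Y] (mod int (p^r))" using c cop by (simp add: cong_mult_rcancel)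
  then have "[((2*a) choose a) * ((2*b) choose b) = ((2*s) choose s) * ((2*t) choose t)] (mod p^r)"
    unfolding X_def Y_def by (simp only: cong_int_iff)
  then show ?thesis unfolding ea eb n_def[symmetric] t_def[symmetric] by (simp add: mult.assoc)
qed

end
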